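(* Let $S\subseteq\Sigma^n$ be a double-MDS-code and let $\gamma$ be the number of connected components of $G(S)$ (equivalently, the number of prime double-codes contained in $S$). (a) If $G(S)$ is bipartite, then $S$ contains exactly $2^\gamma$ distinct subsets that are $(n,2)_4$ MDS codes. (b) If $G(S)$ is not bipartite, then $S$ contains no $(n,2)_4$ MDS code.
   Context: Let $\Sigma=\{0,1,2,3\}$. An $i$-line of $\Sigma^n$ is a set of the four words that agree in all coordinates except the $i$th; a line is an $i$-line for some $i$. An $(n,2)_4$ MDS code is a set meeting every line in exactly one element. A double-code is a set meeting every line in $0$ or $2$ elements; a double-MDS-code is a set meeting every line in exactly $2$ elements; a double-code is complementable if contained in a double-MDS-code, and prime if complementable, nonempty and not partitionable into two or more nonempty double-codes. The adjacency graph $G(S)$ has vertex set $S$, two vertices being adjacent iff they differ in exactly one coordinate. *)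

theory Defs
  imports Main
begin

definition Sigma :: "nat \<Rightarrow> nat list set" where
  "Sigma n = {w. length w = n \<and> set w \<subseteq> {0..<4}}"

definition line :: "nat list \<Rightarrow> nat \<Rightarrow> nat list set" where
  "line w i = {w[i := a] | a. a < 4}"

definition lines :: "nat \<Rightarrow> nat list set set" where
  "lines n = {line w i | w i. w \<in> Sigma n \<and> i < n}"

definition mds_code :: "nat \<Rightarrow> nat list set \<Rightarrow> bool" where
  "mds_code n C \<longleftrightarrow> C \<subseteq> Sigma n \<and> (\<forall>L \<in> lines n. card (L \<inter> C) = 1)"

definition double_mds_code :: "nat \<Rightarrow> nat list set \<Rightarrow> bool" where
  "double_mds_code n S \<longleftrightarrow> S \<subseteq> Sigma n \<and> (\<forall>L \<in> lines n. card (L \<inter> S) = 2)"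

definition adjacent :: "nat list \<Rightarrow> nat list \<Rightarrow> bool" where
  "adjacent u v \<longleftrightarrow> length u = length v \<and> card {i. i < length u \<and> u ! i \<noteq> v ! i} = 1"

definition adj_rel :: "nat list set \<Rightarrow> (nat list \<times> nat list) set" where
  "adj_rel S = {(u, v). u \<in> S \<and> v \<in> S \<and> adjacent u v}"

definition num_components :: "nat list set \<Rightarrow> nat" where
  "num_components S = card (S // ((adj_rel S)\<^sup>*))"

definition bipartite_graph :: "nat list set \<Rightarrow> bool" where
  "bipartite_graph S \<longleftrightarrow> (\<exists>f :: nat list \<Rightarrow> bool. \<forall>(u, v) \<in> adj_rel S. f u \<noteq> f v)"

end

theory Submission imports Defs begin

lemma adjacent_sym: "adjacent u v \<Longrightarrow> adjacent v u"
proof -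
  assume "adjacent u v"
  hence lv: "length u = length v" and cu: "card {i. i < length u \<and> u ! i \<noteq> v ! i} = 1"
    by (auto simp: adjacent_def)
  have eq: "{i. i < length v \<and> v ! i \<noteq> u ! i} = {i. i < length u \<and> u ! i \<noteq> v ! i}" using lv by auto
  have "card {i. i < length v \<and> v ! i \<noteq> u ! i} = 1" by (subst eq) (rule cu)
  with lv show ?thesis unfolding adjacent_def by (intro conjI) (rule sym)
qed

lemma finite_Sigma: "finite (Sigma n)"
proof -
  have "Sigma n = {xs. set xs \<subseteq> {0..<4} \<and> length xs = n}" by (auto simp: Sigma_def)
  thus ?thesis using finite_lists_length_eq[of "{0..<(4::nat)}" n] by simp
qed

lemma adj_line:
  assumes "u \<in> Sigma n" "v \<in> Sigma n" "adjacent u v"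
  shows "\<exists>L\<in>lines n. u \<in> L \<and> v \<in> L \<and> u \<noteq> v"
proof -
  from assms(3) have len: "length u = length v" and c: "card {i. i < length u \<and> u ! i \<noteq> v ! i} = 1"
    by (auto simp: adjacent_def)
  from c obtain i where i: "{i. i < length u \<and> u ! i \<noteq> v ! i} = {i}" by (auto simp: card_1_singleton_iff)
  have il: "i < length u" and ne: "u ! i \<noteq> v ! i" using i by auto
  have lu: "length u = n" using assms(1) by (simp add: Sigma_def)
  have "v ! i \<in> set v" using il len by simp
  hence v4: "v ! i < 4" using assms(2) by (auto simp: Sigma_def)
  have "u ! i \<in> set u" using il by simp
  hence u4: "u ! i < 4" using assms(1) by (auto simp: Sigma_def)
  have veq: "v = u[i := v ! i]"
  proof (rule nth_equalityI)
    show "length v = length (u[i := v ! i])" using len by simp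
    fix j
    assume jl: "j < length v"
    show "v ! j = u[i := v ! i] ! j"
    proof (cases "j = i")
      case True thus ?thesis using il by simp
    next
      case False
      hence "j \<notin> {i. i < length u \<and> u ! i \<noteq> v ! i}" using i by blast
      thus ?thesis using False jl len by simp
    qed
  qed
  have "u = u[i := u ! i]" by simp
  hence "u \<in> line u i" "v \<in> line u i" using u4 v4 veq unfolding line_def by blast+
  moreover have "line u i \<in> lines n" using assms(1) il lu unfolding lines_def by blast
  moreover have "u \<noteq> v" using ne by auto
  ultimately show ?thesis by blast
qed

lemma line_adj:
  assumes "w \<in> Sigma n" "i < n" "x \<in> line w i" "y \<in> line w i" "x \<noteq> y"
  shows "adjacent x y"
proof -
  obtain a b where x: "x = w[i := a]" and y: "y = w[i := b]" using assms(3,4) by (auto simp: line_def)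
  have lw: "length w = n" using assms(1) by (simp add: Sigma_def)
  have "a \<noteq> b" using x y assms(5) by auto
  hence "{j. j < length x \<and> x ! j \<noteq> y ! j} = {i}" using x y lw assms(2) by (auto simp: nth_list_update)
  thus ?thesis using x y unfolding adjacent_def by simp
qed

lemma mds_iff:
  assumes S: "double_mds_code n S" and CS: "C \<subseteq> S"
  shows "mds_code n C \<longleftrightarrow> (\<forall>(u, v) \<in> adj_rel S. (u \<in> C) \<noteq> (v \<in> C))"
proof
  have SS: "S \<subseteq> Sigma n" and SL: "\<forall>L\<in>lines n. card (L \<inter> S) = 2" using S by (auto simp: double_mds_code_def)
  assume m: "mds_code n C"
  show "\<forall>(u, v) \<in> adj_rel S. (u \<in> C) \<noteq> (v \<in> C)"
  proof (clarify)
    fix u v assume uv: "(u, v) \<in> adj_rel S"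
    hence uS: "u \<in> S" and vS: "v \<in> S" and ad: "adjacent u v" by (auto simp: adj_rel_def)
    obtain L where L: "L \<in> lines n" "u \<in> L" "v \<in> L" "u \<noteq> v" using adj_line[OF _ _ ad] uS vS SS by blast
    obtain x y where xy: "L \<inter> S = {x, y}" "x \<noteq> y" using SL L(1) by (auto simp: card_2_iff)
    have fin: "finite (L \<inter> S)" using xy by simp
    have "{u, v} \<subseteq> L \<inter> S" using L uS vS by auto
    moreover have "card {u, v} = card (L \<inter> S)" using xy L by simp
    ultimately have LS: "L \<inter> S = {u, v}" using card_subset_eq[OF fin] by blast
    have "L \<inter> C = {u, v} \<inter> C" using LS CS by auto
    moreover have "card (L \<inter> C) = 1" using m L(1) by (auto simp: mds_code_def)
    ultimately show "(u \<in> C) = (v \<in> C) \<Longrightarrow> False" using L(4) by (cases "u \<in> C") auto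
  qed
next
  have SS: "S \<subseteq> Sigma n" and SL: "\<forall>L\<in>lines n. card (L \<inter> S) = 2" using S by (auto simp: double_mds_code_def)
  assume h: "\<forall>(u, v) \<in> adj_rel S. (u \<in> C) \<noteq> (v \<in> C)"
  show "mds_code n C" unfolding mds_code_def
  proof (intro conjI ballI)
    show "C \<subseteq> Sigma n" using CS SS by auto
    fix L assume L: "L \<in> lines n"
    then obtain w i where w: "w \<in> Sigma n" "i < n" "L = line w i" by (auto simp: lines_def)
    obtain x y where xy: "L \<inter> S = {x, y}" "x \<noteq> y" using SL L by (auto simp: card_2_iff)
    have "adjacent x y" using line_adj[OF w(1,2), of x y] xy w(3) by auto
    hence "(x, y) \<in> adj_rel S" using xy by (auto simp: adj_rel_def)
    hence d: "(x \<in> C) \<noteq> (y \<in> C)" using h by auto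
    have "L \<inter> C = {x, y} \<inter> C" using xy CS by auto
    thus "card (L \<inter> C) = 1" using d by (cases "x \<in> C") auto
  qed
qed


lemma count_colorings:
  fixes f :: "nat list \<Rightarrow> bool"
  assumes fin: "finite S" and f: "\<forall>(u, v) \<in> adj_rel S. f u \<noteq> f v"
  shows "card {C. C \<subseteq> S \<and> (\<forall>(u, v) \<in> adj_rel S. (u \<in> C) \<noteq> (v \<in> C))} = 2 ^ card (S // ((adj_rel S)\<^sup>*))"
proof -
  define R where "R = (adj_rel S)\<^sup>*"
  define Q where "Q = S // R"
  define V where "V = {C. C \<subseteq> S \<and> (\<forall>(u, v) \<in> adj_rel S. (u \<in> C) \<noteq> (v \<in> C))}"
  define \<phi> where "\<phi> T = {u \<in> S. f u \<noteq> (R `` {u} \<in> T)}" for T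
  have "sym (adj_rel S)" unfolding sym_def adj_rel_def using adjacent_sym by blast
  hence symR: "sym R" unfolding R_def by (rule sym_rtrancl)
  have transR: "trans R" unfolding R_def by (rule trans_rtrancl)
  have same: "R `` {u} = R `` {v}" if "(u, v) \<in> R" for u v
  proof -
    have vu: "(v, u) \<in> R" using symR that by (rule symD)
    show ?thesis
    proof (rule set_eqI)
      fix w
      show "w \<in> R `` {u} \<longleftrightarrow> w \<in> R `` {v}"
        using that vu unfolding R_def Image_singleton_iff by (blast intro: rtrancl_trans)
    qed
  qed
  have cls: "R `` {u} \<in> Q" if "u \<in> S" for u
    using that unfolding Q_def by (rule quotientI)
  have memQ: "X = R `` {u}" if XQ: "X \<in> Q" and uX: "u \<in> X" for X u
  proof -
    obtain x where "x \<in> S" "X = R `` {x}" using XQ unfolding Q_def quotient_def by blast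
    thus ?thesis using same uX by auto
  qed
  have Qne: "\<exists>x\<in>S. X = R `` {x}" if "X \<in> Q" for X
    using that unfolding Q_def by (auto elim: quotientE)
  have refl: "u \<in> R `` {u}" for u unfolding R_def by simp
  have inv: "((u \<in> C) = f u) = ((v \<in> C) = f v)" if "C \<in> V" "(u, v) \<in> R" for C u v
    using that(2) unfolding R_def
  proof (induction rule: rtrancl_induct)
    case base thus ?case by simp
  next
    case (step y z)
    have "f y \<noteq> f z" using f step(2) by auto
    moreover have "(y \<in> C) \<noteq> (z \<in> C)" using that(1) step(2) unfolding V_def by auto
    ultimately show ?case using step(3) by argo
  qed
  have inj: "inj_on \<phi> (Pow Q)"
  proof (rule inj_onI)
    fix T1 T2 assume T1: "T1 \<in> Pow Q" and T2: "T2 \<in> Pow Q" and eq: "\<phi> T1 = \<phi> T2"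
    have "X \<in> T1 \<longleftrightarrow> X \<in> T2" if XQ: "X \<in> Q" for X
    proof -
      obtain x where x: "x \<in> S" "X = R `` {x}" using Qne[OF XQ] by blast
      have "(x \<in> \<phi> T1) = (x \<in> \<phi> T2)" using eq by simp
      thus ?thesis using x unfolding \<phi>_def by auto
    qed
    thus "T1 = T2" using T1 T2 by blast
  qed
  have img: "\<phi> ` Pow Q = V"
  proof
    show "\<phi> ` Pow Q \<subseteq> V"
    proof
      fix C assume "C \<in> \<phi> ` Pow Q"
      then obtain T where C: "C = \<phi> T" by blast
      have alt: "(u \<in> C) \<noteq> (v \<in> C)" if uv: "(u, v) \<in> adj_rel S" for u v
      proof -
        have "(u, v) \<in> R" using uv unfolding R_def by blast
        hence "R `` {u} = R `` {v}" by (rule same)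
        moreover have "u \<in> S" "v \<in> S" "f u \<noteq> f v" using uv f by (auto simp: adj_rel_def)
        ultimately show ?thesis unfolding C \<phi>_def by auto
      qed
      have "C \<subseteq> S" unfolding C \<phi>_def by blast
      thus "C \<in> V" unfolding V_def using alt by blast
    qed
  next
    show "V \<subseteq> \<phi> ` Pow Q"
    proof
      fix C assume CV: "C \<in> V"
      define T where "T = {X \<in> Q. \<exists>u\<in>X. (u \<in> C) \<noteq> f u}"
      have "C = \<phi> T"
      proof
        show "C \<subseteq> \<phi> T"
        proof
          fix u assume uC: "u \<in> C"
          hence uS: "u \<in> S" using CV unfolding V_def by auto
          have "R `` {u} \<notin> T \<longleftrightarrow> f u" 
          proof
            assume "R `` {u} \<notin> T"
            hence "\<not> ((u \<in> C) \<noteq> f u)" using cls[OF uS] refl unfolding T_def by blast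
            thus "f u" using uC by simp
          next
            assume fu: "f u"
            show "R `` {u} \<notin> T"
            proof
              assume "R `` {u} \<in> T"
              then obtain w where w: "w \<in> R `` {u}" "(w \<in> C) \<noteq> f w" unfolding T_def by blast
              have "(u, w) \<in> R" using w(1) by simp
              from inv[OF CV this] show False using w(2) uC fu by argo
            qed
          qed
          thus "u \<in> \<phi> T" unfolding \<phi>_def using uS by blast
        qed
      next
        show "\<phi> T \<subseteq> C"
        proof
          fix u assume u: "u \<in> \<phi> T"
          hence uS: "u \<in> S" and fu: "f u \<noteq> (R `` {u} \<in> T)" unfolding \<phi>_def by auto
          show "u \<in> C"
          proof (rule ccontr)
            assume uC: "u \<notin> C"
            show False
            proof (cases "f u")
              case True
              hence "R `` {u} \<in> T" using cls[OF uS] refl uC unfolding T_def by blast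
              thus False using fu True by simp
            next
              case False
              hence "R `` {u} \<in> T" using fu by simp
              then obtain w where w: "w \<in> R `` {u}" "(w \<in> C) \<noteq> f w" unfolding T_def by blast
              have "(u, w) \<in> R" using w(1) by simp
              from inv[OF CV this] show False using w(2) uC False by argo
            qed
          qed
        qed
      qed
      moreover have "T \<in> Pow Q" unfolding T_def by blast
      ultimately show "C \<in> \<phi> ` Pow Q" by blast
    qed
  qed
  have "bij_betw \<phi> (Pow Q) V" using inj img unfolding bij_betw_def by blast
  hence "card V = card (Pow Q)" by (simp add: bij_betw_same_card)
  moreover have "finite Q"
  proof -
    have "Q = (\<lambda>x. R `` {x}) ` S" unfolding Q_def quotient_def by auto
    thus ?thesis using fin by simp
  qed
  ultimately show ?thesis unfolding V_def Q_def R_def by (simp add: card_Pow)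
qed

theorem proposition5:
  fixes n :: nat and S :: "nat list set"
  assumes "double_mds_code n S"
  shows "(bipartite_graph S \<longrightarrow>
           card {C. C \<subseteq> S \<and> mds_code n C} = 2 ^ num_components S)
       \<and> (\<not> bipartite_graph S \<longrightarrow> \<not> (\<exists>C. C \<subseteq> S \<and> mds_code n C))"
proof (intro conjI impI)
  have SS: "S \<subseteq> Sigma n" using assms by (simp add: double_mds_code_def)
  hence fin: "finite S" using finite_Sigma finite_subset by blast
  have eqV: "{C. C \<subseteq> S \<and> mds_code n C} = {C. C \<subseteq> S \<and> (\<forall>(u, v) \<in> adj_rel S. (u \<in> C) \<noteq> (v \<in> C))}"
  proof (rule Collect_cong)
    fix C
    show "(C \<subseteq> S \<and> mds_code n C) = (C \<subseteq> S \<and> (\<forall>(u, v) \<in> adj_rel S. (u \<in> C) \<noteq> (v \<in> C)))"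
      using mds_iff[OF assms, of C] by (cases "C \<subseteq> S") simp_all
  qed
  {
    assume "bipartite_graph S"
    then obtain f :: "nat list \<Rightarrow> bool" where f: "\<forall>(u, v) \<in> adj_rel S. f u \<noteq> f v"
      unfolding bipartite_graph_def by blast
    show "card {C. C \<subseteq> S \<and> mds_code n C} = 2 ^ num_components S"
      unfolding eqV num_components_def using count_colorings[OF fin f] .
  }
  {
    assume nb: "\<not> bipartite_graph S"
    show "\<not> (\<exists>C. C \<subseteq> S \<and> mds_code n C)"
    proof
      assume "\<exists>C. C \<subseteq> S \<and> mds_code n C"
      then obtain C where CS: "C \<subseteq> S" and mC: "mds_code n C" by blast
      have "\<forall>(u, v) \<in> adj_rel S. (u \<in> C) \<noteq> (v \<in> C)" using mds_iff[OF assms CS] mC by (rule iffD1)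
      hence "bipartite_graph S" unfolding bipartite_graph_def by (rule exI[of _ "\<lambda>u. u \<in> C"])
      thus False using nb by simp
    qed
  }
qed

end
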